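(* Under the hypotheses and notation of the noisy quadratic model below (with $0<\eta h_j<1$ for all $j$, $\alpha\in(0,1]$, $\beta_i\ge0$, $\sum_{i=0}^{k-1}\beta_i=1$, $\beta_0<1$), the stationary variance of AvgLookahead $$\mathbb V^*_{\mathrm{AvgLA}}=\alpha^2\,\mathbf Y\,\big(\mathbf I-\mathbf A^2\big)^{-1}\,\eta^2\mathbf H^2\Sigma\,(\mathbf I-\mathbf M^2)^{-1}$$ satisfies, entrywise, $$\mathbb V^*_{\mathrm{AvgLA}}\ \le\ \mathbb V^*_{\mathrm{ERM}}:=\eta^2\mathbf H^2\Sigma\,(\mathbf I-\mathbf M^2)^{-1},$$ where $\mathbb V^*_{\mathrm{ERM}}$ is the stationary coordinatewise variance of plain SGD $\boldsymbol\theta_{t+1}=\mathbf M\boldsymbol\theta_t+\eta\mathbf H\mathbf c_t$.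
   Context: Noisy quadratic model: $\mathbf H=\mathrm{diag}(h_1,\dots,h_d)$, $\Sigma=\mathrm{diag}(\sigma_1^2,\dots,\sigma_d^2)$ with $\sigma_j^2\ge0$, stochastic loss $\mathcal L(\boldsymbol\theta;\mathbf c)=\tfrac12(\boldsymbol\theta-\mathbf c)^\top\mathbf H(\boldsymbol\theta-\mathbf c)$ with i.i.d. $\mathbf c\sim\mathcal N(\mathbf 0,\Sigma)$ drawn at each step; $\mathbf M=\mathbf I-\eta\mathbf H$. AvgLookahead: fast weights $\boldsymbol\theta_{t,0}=\boldsymbol\phi_t$, $\boldsymbol\theta_{t,i+1}=\mathbf M\boldsymbol\theta_{t,i}+\eta\mathbf H\mathbf c_{t,i}$, slow update $\boldsymbol\phi_{t+1}=(1-\alpha)\boldsymbol\phi_t+\alpha\sum_{i=0}^{k-1}\beta_i\boldsymbol\theta_{t,i}$. Here $\mathbf A=(1-\alpha)\mathbf I+\alpha\sum_{i=0}^{k-1}\beta_i\mathbf M^i$ and $\mathbf Y=\sum_{i=0}^{k-1}\beta_i^2(\mathbf I-\mathbf M^{2i})+2\sum_{i=0}^{k-1}\sum_{j=0}^{i-1}\beta_i\beta_j\mathbf M^{i-j}(\mathbf I-\mathbf M^{2j})$. All matrices are diagonal and all inequalities are entrywise. *)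

theory Defs
  imports "HOL-Analysis.Analysis"
begin

text \<open>All matrices of the noisy quadratic model are diagonal, so each is represented by
its vector of diagonal entries (indexed by a finite type 'd), and every matrix
operation (product, inverse, comparison) acts coordinatewise.\<close>

definition Mdiag :: "real \<Rightarrow> real ^ 'd \<Rightarrow> real ^ 'd" where
  "Mdiag \<eta> h = (\<chi> j. 1 - \<eta> * h $ j)"

definition A_coef :: "real \<Rightarrow> (nat \<Rightarrow> real) \<Rightarrow> nat \<Rightarrow> real \<Rightarrow> real" where
  "A_coef \<alpha> \<beta> k m = (1 - \<alpha>) + \<alpha> * (\<Sum>i<k. \<beta> i * m ^ i)"

definition Y_coef :: "(nat \<Rightarrow> real) \<Rightarrow> nat \<Rightarrow> real \<Rightarrow> real" where
  "Y_coef \<beta> k m =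
     (\<Sum>i<k. (\<beta> i)^2 * (1 - m ^ (2*i)))
     + 2 * (\<Sum>i<k. \<Sum>j<i. \<beta> i * \<beta> j * m ^ (i - j) * (1 - m ^ (2*j)))"

definition V_ERM :: "real \<Rightarrow> real ^ 'd \<Rightarrow> real ^ 'd \<Rightarrow> real ^ 'd" where
  "V_ERM \<eta> h \<sigma>2 = (\<chi> j. \<eta>^2 * (h $ j)^2 * \<sigma>2 $ j / (1 - (Mdiag \<eta> h $ j)^2))"

definition V_AvgLA :: "real \<Rightarrow> (nat \<Rightarrow> real) \<Rightarrow> nat \<Rightarrow> real \<Rightarrow> real ^ 'd \<Rightarrow> real ^ 'd \<Rightarrow> real ^ 'd" where
  "V_AvgLA \<alpha> \<beta> k \<eta> h \<sigma>2 =
     (\<chi> j. \<alpha>^2 * Y_coef \<beta> k (Mdiag \<eta> h $ j)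
            / (1 - (A_coef \<alpha> \<beta> k (Mdiag \<eta> h $ j))^2)
            * (V_ERM \<eta> h \<sigma>2 $ j))"

end

theory Submission
  imports Defs
begin

lemma sq_sum: "(\<Sum>i<k. f i)^2 = (\<Sum>i<k. (f i)^2) + 2 * (\<Sum>i<k. \<Sum>j<i. f i * f j) " for f :: "nat \<Rightarrow> real"
proof (induction k)
  case 0 then show ?case by simp
next
  case (Suc k)
  have "(\<Sum>i<Suc k. f i)^2 = (\<Sum>i<k. f i)^2 + 2 * (f k * (\<Sum>j<k. f j)) + (f k)^2"
    by (simp add: power2_eq_square algebra_simps)
  also have "f k * (\<Sum>j<k. f j) = (\<Sum>j<k. f k * f j)" by (simp add: sum_distrib_left)
  finally show ?case using Suc by simp
qed

lemma key:
  fixes m :: real and \<beta> :: "nat \<Rightarrow> real"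
  assumes m: "0 < m" "m < 1" and b: "\<forall>i<k. \<beta> i \<ge> 0" and s1: "(\<Sum>i<k. \<beta> i) = 1"
  shows "Y_coef \<beta> k m + (\<Sum>i<k. \<beta> i * m^i)^2 \<le> 1"
proof -
  have e1: "(\<Sum>i<k. \<beta> i * m^i)^2 = (\<Sum>i<k. (\<beta> i)^2 * m^(2*i)) + 2 * (\<Sum>i<k. \<Sum>j<i. \<beta> i * \<beta> j * m^(i+j))"
    using sq_sum[of "\<lambda>i. \<beta> i * m^i" k]
    by (simp add: power_mult_distrib power_add power_mult mult.commute mult.left_commute)
  have e2: "1 = (\<Sum>i<k. (\<beta> i)^2) + 2 * (\<Sum>i<k. \<Sum>j<i. \<beta> i * \<beta> j)"
    using sq_sum[of \<beta> k] s1 by simp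
  have t: "\<beta> i * \<beta> j * m ^ (i - j) * (1 - m ^ (2*j)) + \<beta> i * \<beta> j * m^(i+j) \<le> \<beta> i * \<beta> j"
    if "i < k" "j < i" for i j
  proof -
    have "m^(i-j) * m^(2*j) = m^(i+j)" using that by (simp add: power_add[symmetric] add.commute)
    hence "\<beta> i * \<beta> j * m ^ (i - j) * (1 - m ^ (2*j)) + \<beta> i * \<beta> j * m^(i+j) = \<beta> i * \<beta> j * m^(i-j)"
      by (simp add: algebra_simps)
    also have "\<dots> \<le> \<beta> i * \<beta> j"
      using b that m by (intro mult_left_le mult_nonneg_nonneg power_le_one) auto
    finally show ?thesis .
  qed
  have "(\<Sum>i<k. \<Sum>j<i. \<beta> i * \<beta> j * m ^ (i - j) * (1 - m ^ (2*j))) + (\<Sum>i<k. \<Sum>j<i. \<beta> i * \<beta> j * m^(i+j))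
     \<le> (\<Sum>i<k. \<Sum>j<i. \<beta> i * \<beta> j)"
    unfolding sum.distrib[symmetric] by (intro sum_mono) (use t in auto)
  moreover have "(\<Sum>i<k. (\<beta> i)^2 * (1 - m ^ (2*i))) + (\<Sum>i<k. (\<beta> i)^2 * m^(2*i)) = (\<Sum>i<k. (\<beta> i)^2)"
    unfolding sum.distrib[symmetric] by (simp add: algebra_simps)
  ultimately show ?thesis unfolding Y_coef_def e1 by (subst e2) linarith
qed

lemma Sbounds:
  fixes m :: real and \<beta> :: "nat \<Rightarrow> real"
  assumes m: "0 < m" "m < 1" and b: "\<forall>i<k. \<beta> i \<ge> 0" and s1: "(\<Sum>i<k. \<beta> i) = 1" and b0: "\<beta> 0 < 1"
  shows "0 \<le> (\<Sum>i<k. \<beta> i * m^i)" "(\<Sum>i<k. \<beta> i * m^i) < 1"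
proof -
  show "0 \<le> (\<Sum>i<k. \<beta> i * m^i)" using b m by (intro sum_nonneg) auto
  have k: "k \<ge> 1" using s1 by (cases k) auto
  have U: "{..<k} = insert 0 {1..<k}" using k by auto
  have "(\<Sum>i<k. \<beta> i * m^i) = \<beta> 0 + (\<Sum>i\<in>{1..<k}. \<beta> i * m^i)" by (simp add: U)
  also have "(\<Sum>i\<in>{1..<k}. \<beta> i * m^i) \<le> (\<Sum>i\<in>{1..<k}. \<beta> i * m)"
  proof (intro sum_mono)
    fix i assume "i \<in> {1..<k}"
    hence "m^i \<le> m^1" "\<beta> i \<ge> 0" using m b power_decreasing[of 1 i m] by auto
    thus "\<beta> i * m^i \<le> \<beta> i * m" by (simp add: mult_left_mono)
  qed
  also have "(\<Sum>i\<in>{1..<k}. \<beta> i * m) = (1 - \<beta> 0) * m"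
    using s1 by (simp add: U sum_distrib_right[symmetric])
  finally have "(\<Sum>i<k. \<beta> i * m^i) \<le> \<beta> 0 + (1 - \<beta> 0) * m" by simp
  moreover have "(1 - \<beta> 0) * m < 1 - \<beta> 0" using b0 m by simp
  ultimately show "(\<Sum>i<k. \<beta> i * m^i) < 1" by linarith
qed

theorem mainTheorem3:
  fixes h \<sigma>2 :: "real ^ 'd" and \<eta> \<alpha> :: real and \<beta> :: "nat \<Rightarrow> real" and k :: nat
  assumes "\<forall>j. 0 < \<eta> * h $ j \<and> \<eta> * h $ j < 1"
    and "\<forall>j. \<sigma>2 $ j \<ge> 0"
    and "0 < \<alpha>" and "\<alpha> \<le> 1"
    and "\<forall>i<k. \<beta> i \<ge> 0"
    and "(\<Sum>i<k. \<beta> i) = 1"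
    and "\<beta> 0 < 1"
  shows "\<forall>j. V_AvgLA \<alpha> \<beta> k \<eta> h \<sigma>2 $ j \<le> V_ERM \<eta> h \<sigma>2 $ j"
proof
  fix j
  define m where "m = Mdiag \<eta> h $ j"
  have m: "0 < m" "m < 1" using assms(1) by (auto simp: m_def Mdiag_def)
  define S where "S = (\<Sum>i<k. \<beta> i * m^i)"
  have S: "0 \<le> S" "S < 1" using Sbounds[OF m assms(5-7)] by (auto simp: S_def)
  have Y: "Y_coef \<beta> k m \<le> 1 - S^2" using key[OF m assms(5,6)] by (simp add: S_def)
  define u where "u = 1 - S"
  have u: "0 < u" "u \<le> 1" using S by (auto simp: u_def)
  have A: "A_coef \<alpha> \<beta> k m = 1 - \<alpha> * u"
    by (simp add: A_coef_def S_def[symmetric] u_def algebra_simps)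
  have au: "\<alpha> * u \<le> 1" "0 < \<alpha> * u" using u assms(3,4) mult_mono[of \<alpha> 1 u 1] by auto
  have D: "1 - (A_coef \<alpha> \<beta> k m)^2 = \<alpha> * u * (2 - \<alpha> * u)"
    by (simp add: A power2_eq_square algebra_simps)
  have Dpos: "0 < 1 - (A_coef \<alpha> \<beta> k m)^2" unfolding D using au by simp
  have "\<alpha>^2 * Y_coef \<beta> k m \<le> \<alpha>^2 * (1 - S^2)" using Y by (simp add: mult_left_mono)
  also have "\<alpha>^2 * (1 - S^2) = \<alpha>^2 * u * (2 - u)" by (simp add: u_def power2_eq_square algebra_simps)
  also have "\<dots> \<le> \<alpha> * u * (2 - \<alpha> * u)"
  proof -
    have "\<alpha> * (2 - u) \<le> 2 - \<alpha> * u" using assms(4) by (simp add: algebra_simps)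
    hence "(\<alpha> * u) * (\<alpha> * (2 - u)) \<le> (\<alpha> * u) * (2 - \<alpha> * u)" using au by (intro mult_left_mono) auto
    thus ?thesis by (simp add: power2_eq_square algebra_simps)
  qed
  finally have R: "\<alpha>^2 * Y_coef \<beta> k m / (1 - (A_coef \<alpha> \<beta> k m)^2) \<le> 1"
    using Dpos D by (simp add: divide_le_eq)
  have m2: "0 < 1 - m^2" using m by (simp add: power_less_one_iff abs_square_less_1)
  have V: "0 \<le> V_ERM \<eta> h \<sigma>2 $ j" using assms(2) m2 by (simp add: V_ERM_def m_def[symmetric])
  have "V_AvgLA \<alpha> \<beta> k \<eta> h \<sigma>2 $ j = \<alpha>^2 * Y_coef \<beta> k m / (1 - (A_coef \<alpha> \<beta> k m)^2) * V_ERM \<eta> h \<sigma>2 $ j"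
    by (simp add: V_AvgLA_def m_def)
  also have "\<dots> \<le> 1 * V_ERM \<eta> h \<sigma>2 $ j" using R V by (intro mult_right_mono) auto
  finally show "V_AvgLA \<alpha> \<beta> k \<eta> h \<sigma>2 $ j \<le> V_ERM \<eta> h \<sigma>2 $ j" by simp
qed

end
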